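(* Let $n\ge 4$ and $2\le t\le n-2$. Under the permutation null distribution, for all $a,b\in\{1,2\}$, \[ \mathsf{cov}\big(W_a(t),D_b(t)\big)=0 . \] Consequently $W_1(t)\pm W_2(t)$ are each uncorrelated with $D_1(t)\pm D_2(t)$ (all four sign combinations), and more generally any linear combination of $W_1(t),W_2(t)$ is uncorrelated with any linear combination of $D_1(t),D_2(t)$.
   Context: Let $G_1,\dots,G_n$ be a sequence of observations (networks) and let $K_1,K_2$ be two real symmetric $n\times n$ kernel matrices computed from this sequence, with $(i,j)$ entry $k_{xij}$ of $K_x$, $x\in\{1,2\}$. The permutation null distribution assigns probability $1/n!$ to each of the $n!$ permutations of the sequence, i.e. the kernel matrices $K_x$ are replaced by $(k_{x\pi(i)\pi(j)})_{i,j}$ for a uniformly random permutation $\pi$ of $\{1,\dots,n\}$ (the same $\pi$ for both kernels); $\mathsf{E},\mathsf{var},\mathsf{cov}$ denote expectation, variance and covariance under this distribution. For $x\in\{1,2\}$ define \[ \alpha_x(t)=\frac{1}{t(t-1)}\sum_{i=1}^n\sum_{j\ne i}k_{xij}\mathbb{1}\{i,j\le t\},\qquad \beta_x(t)=\frac{1}{(n-t)(n-t-1)}\sum_{i=1}^n\sum_{j\ne i}k_{xij}\mathbb{1}\{i,j> t\}, \] \[ W_x(t)=\frac{t}{n}\alpha_x(t)+\frac{n-t}{n}\beta_x(t),\qquad D_x(t)=\frac{t(t-1)}{n(n-1)}\alpha_x(t)-\frac{(n-t)(n-t-1)}{n(n-1)}\beta_x(t). \] *)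

theory Defs
  imports Complex_Main "HOL-Combinatorics.Permutations"
begin

definition permk :: "(nat \<Rightarrow> nat) \<Rightarrow> (nat \<Rightarrow> nat \<Rightarrow> real) \<Rightarrow> nat \<Rightarrow> nat \<Rightarrow> real" where
  "permk p k = (\<lambda>i j. k (p i) (p j))"

definition alpha :: "nat \<Rightarrow> (nat \<Rightarrow> nat \<Rightarrow> real) \<Rightarrow> nat \<Rightarrow> real" where
  "alpha n k t = (1 / (real t * (real t - 1))) *
     (\<Sum>i\<in>{1..n}. \<Sum>j\<in>{1..n} - {i}. k i j * (if i \<le> t \<and> j \<le> t then 1 else 0))"

definition beta :: "nat \<Rightarrow> (nat \<Rightarrow> nat \<Rightarrow> real) \<Rightarrow> nat \<Rightarrow> real" where
  "beta n k t = (1 / ((real n - real t) * (real n - real t - 1))) *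
     (\<Sum>i\<in>{1..n}. \<Sum>j\<in>{1..n} - {i}. k i j * (if i > t \<and> j > t then 1 else 0))"

definition Wstat :: "nat \<Rightarrow> (nat \<Rightarrow> nat \<Rightarrow> real) \<Rightarrow> nat \<Rightarrow> real" where
  "Wstat n k t = (real t / real n) * alpha n k t + ((real n - real t) / real n) * beta n k t"

definition Dstat :: "nat \<Rightarrow> (nat \<Rightarrow> nat \<Rightarrow> real) \<Rightarrow> nat \<Rightarrow> real" where
  "Dstat n k t = (real t * (real t - 1)) / (real n * (real n - 1)) * alpha n k t
     - ((real n - real t) * (real n - real t - 1)) / (real n * (real n - 1)) * beta n k t"

definition permE :: "nat \<Rightarrow> ((nat \<Rightarrow> nat) \<Rightarrow> real) \<Rightarrow> real" where
  "permE n X = (\<Sum>p\<in>{p. p permutes {1..n}}. X p) / fact n"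

definition permCov :: "nat \<Rightarrow> ((nat \<Rightarrow> nat) \<Rightarrow> real) \<Rightarrow> ((nat \<Rightarrow> nat) \<Rightarrow> real) \<Rightarrow> real" where
  "permCov n X Y = permE n (\<lambda>p. X p * Y p) - permE n X * permE n Y"

end

theory Submission
  imports Defs "HOL-Combinatorics.Permutations"
begin

lemma permE_cong: "(\<And>p. p permutes {1..n} \<Longrightarrow> f p = g p) \<Longrightarrow> permE n f = permE n g"
  unfolding permE_def by (auto intro!: sum.cong)

lemma permE_sum: "permE n (\<lambda>p. \<Sum>x\<in>I. f x p) = (\<Sum>x\<in>I. permE n (f x))"
  unfolding permE_def by (subst sum.swap) (simp add: sum_divide_distrib)

lemma permE_cmult: "permE n (\<lambda>p. c * f p) = c * permE n f"
  unfolding permE_def by (simp add: sum_distrib_left)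

lemma permE_cmult_right: "permE n (\<lambda>p. f p * c) = permE n f * c"
  unfolding permE_def by (simp add: sum_distrib_right)

lemma permE_add: "permE n (\<lambda>p. f p + g p) = permE n f + permE n g"
  unfolding permE_def by (simp add: sum.distrib add_divide_distrib)

lemma permE_diff: "permE n (\<lambda>p. f p - g p) = permE n f - permE n g"
  unfolding permE_def by (simp add: sum_subtractf diff_divide_distrib)

lemma permE_const: "permE n (\<lambda>p. c) = c"
proof -
  have "card {p. p permutes {1..n}} = fact n"
    by (rule card_permutations) auto
  then show ?thesis unfolding permE_def by simp
qed

lemma permE_inv: "permE n f = permE n (\<lambda>p. f (inv p))"
  unfolding permE_def using sum_permutations_inverse[of f "{1..n}"] by simp

lemma permE_swap: "a \<in> {1..n} \<Longrightarrow> b \<in> {1..n} \<Longrightarrow>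
   permE n f = permE n (\<lambda>p. f (p \<circ> transpose a b))"
  unfolding permE_def using sum_permutations_compose_right[OF permutes_swap_id, of a "{1..n}" b f]
  by simp

lemma permCov_inv: "permCov n X Y = permCov n (\<lambda>p. X (inv p)) (\<lambda>p. Y (inv p))"
proof -
  have 1: "permE n X = permE n (\<lambda>p. X (inv p))" by (rule permE_inv)
  have 2: "permE n Y = permE n (\<lambda>p. Y (inv p))" by (rule permE_inv)
  have 3: "permE n (\<lambda>p. X p * Y p) = permE n (\<lambda>p. X (inv p) * Y (inv p))"
    by (rule permE_inv)
  show ?thesis unfolding permCov_def 1 2 3 ..
qed

lemma permCov_cong: "(\<And>p. p permutes {1..n} \<Longrightarrow> X p = X' p) \<Longrightarrow>
   (\<And>p. p permutes {1..n} \<Longrightarrow> Y p = Y' p) \<Longrightarrow> permCov n X Y = permCov n X' Y'"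
  unfolding permCov_def
  by (metis (no_types, lifting) permE_cong)

lemma permCov_sum_left: "permCov n (\<lambda>p. \<Sum>x\<in>I. f x p) Y = (\<Sum>x\<in>I. permCov n (f x) Y)"
  unfolding permCov_def by (simp add: sum_distrib_right permE_sum sum_subtractf)

lemma permCov_sum_right: "permCov n Y (\<lambda>p. \<Sum>x\<in>I. f x p) = (\<Sum>x\<in>I. permCov n Y (f x))"
  unfolding permCov_def by (simp add: sum_distrib_left permE_sum sum_subtractf)

lemma permCov_cmult_left: "permCov n (\<lambda>p. c * X p) Y = c * permCov n X Y"
proof -
  have "permE n (\<lambda>p. c * X p * Y p) = c * permE n (\<lambda>p. X p * Y p)"
    using permE_cmult[of n c "\<lambda>p. X p * Y p"] by (simp add: mult.assoc)
  then show ?thesis unfolding permCov_def by (simp add: permE_cmult algebra_simps)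
qed

lemma permCov_cmult_right: "permCov n X (\<lambda>p. c * Y p) = c * permCov n X Y"
proof -
  have "permE n (\<lambda>p. X p * (c * Y p)) = c * permE n (\<lambda>p. X p * Y p)"
    using permE_cmult[of n c "\<lambda>p. X p * Y p"] by (simp add: mult.left_commute)
  then show ?thesis unfolding permCov_def by (simp add: permE_cmult algebra_simps)
qed

lemma permCov_add_left: "permCov n (\<lambda>p. X p + Z p) Y = permCov n X Y + permCov n Z Y"
  unfolding permCov_def by (simp add: distrib_right permE_add algebra_simps)

lemma permCov_add_right: "permCov n X (\<lambda>p. Y p + Z p) = permCov n X Y + permCov n X Z"
  unfolding permCov_def by (simp add: distrib_left permE_add algebra_simps)

lemma permCov_diff_right: "permCov n X (\<lambda>p. Y p - Z p) = permCov n X Y - permCov n X Z"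
  unfolding permCov_def by (simp add: right_diff_distrib permE_diff algebra_simps)

lemma permCov_const_right: "permCov n X (\<lambda>p. c) = 0"
  unfolding permCov_def by (simp add: permE_cmult_right permE_const)

lemma reindex2:
  assumes "p permutes S"
  shows "(\<Sum>i\<in>S. \<Sum>j\<in>S-{i}. H i j) = (\<Sum>u\<in>S. \<Sum>v\<in>S-{u}. H (p u) (p v))"
proof -
  have b: "bij_betw p S S" using permutes_imp_bij[OF assms] .
  have "(\<Sum>i\<in>S. \<Sum>j\<in>S-{i}. H i j) = (\<Sum>u\<in>S. \<Sum>j\<in>S-{p u}. H (p u) j)"
    using sum.reindex_bij_betw[OF b, of "\<lambda>i. \<Sum>j\<in>S-{i}. H i j"] by simp
  also have "\<dots> = (\<Sum>u\<in>S. \<Sum>v\<in>S-{u}. H (p u) (p v))"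
  proof (rule sum.cong[OF refl])
    fix u assume "u \<in> S"
    have "bij_betw p (S-{u}) (S-{p u})"
      by (rule bij_betw_DiffI[OF b]) (auto simp: bij_betw_def \<open>u \<in> S\<close> permutes_in_image[OF assms])
    then show "(\<Sum>j\<in>S-{p u}. H (p u) j) = (\<Sum>v\<in>S-{u}. H (p u) (p v))"
      using sum.reindex_bij_betw[of p "S-{u}" "S-{p u}" "\<lambda>j. H (p u) j"] by simp
  qed
  finally show ?thesis .
qed

definition Yv :: "nat \<Rightarrow> (nat \<Rightarrow> nat) \<Rightarrow> nat \<Rightarrow> real" where
  "Yv t p w = (if p w \<le> t then 1 else 0)"

definition Fw :: "nat \<Rightarrow> nat \<Rightarrow> nat \<Rightarrow> nat \<Rightarrow> real" where
  "Fw n t i j = (if i \<le> t \<and> j \<le> t then 1 / (real n * (real t - 1)) else 0)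
     + (if t < i \<and> t < j then 1 / (real n * (real n - real t - 1)) else 0)"

definition Fd :: "nat \<Rightarrow> nat \<Rightarrow> nat \<Rightarrow> nat \<Rightarrow> real" where
  "Fd n t i j = ((if i \<le> t \<and> j \<le> t then 1 else 0) - (if t < i \<and> t < j then 1 else 0))
     / (real n * (real n - 1))"

lemma aux_cancel: "(a::real) \<noteq> 0 \<Longrightarrow> a / x * (1 / (a * b)) = 1 / (x * b)"
  by (cases "x = 0"; cases "b = 0") (simp_all add: field_simps)

lemma aux_cancel2: "(a::real) \<noteq> 0 \<Longrightarrow> a / x * (1 / a) = 1 / x"
  by (cases "x = 0") (simp_all add: field_simps)

lemma W_form:
  assumes "2 \<le> t" "t + 2 \<le> n"
  shows "Wstat n k t = (\<Sum>i\<in>{1..n}. \<Sum>j\<in>{1..n}-{i}. k i j * Fw n t i j)"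
proof -
  have nz: "real n - real t \<noteq> 0" "real n - real t - 1 \<noteq> 0" "real t - 1 \<noteq> 0" "real n \<noteq> 0" "real t \<noteq> 0"
    using assms by auto
  have e1: "real t / real n * (1 / (real t * (real t - 1))) = 1 / (real n * (real t - 1))"
    using nz by (simp add: field_simps)
  have e2: "(real n - real t) / real n * (1 / ((real n - real t) * (real n - real t - 1)))
      = 1 / (real n * (real n - real t - 1))"
    by (rule aux_cancel) (use nz in simp)
  define A where "A = 1 / (real n * (real t - 1))"
  define B where "B = 1 / (real n * (real n - real t - 1))"
  have r: "k i j * Fw n t i j = A * (k i j * (if i \<le> t \<and> j \<le> t then 1 else 0))
      + B * (k i j * (if t < i \<and> t < j then 1 else 0))" for i j
    unfolding Fw_def A_def B_def by simp
  show ?thesis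
    unfolding Wstat_def alpha_def beta_def mult.assoc[symmetric] e1 e2 r
    by (simp add: sum.distrib sum_distrib_left A_def B_def)
qed

lemma D_form:
  assumes "2 \<le> t" "t + 2 \<le> n"
  shows "Dstat n k t = (\<Sum>i\<in>{1..n}. \<Sum>j\<in>{1..n}-{i}. k i j * Fd n t i j)"
proof -
  have nz: "real n - real t \<noteq> 0" "real n - real t - 1 \<noteq> 0" "real t - 1 \<noteq> 0" "real n \<noteq> 0" "real t \<noteq> 0"
    "real n - 1 \<noteq> 0"
    using assms by auto
  define C where "C = 1 / (real n * (real n - 1))"
  have e1: "real t * (real t - 1) / (real n * (real n - 1)) * (1 / (real t * (real t - 1))) = C"
    using nz unfolding C_def by (simp add: field_simps)
  have e2: "(real n - real t) * (real n - real t - 1) / (real n * (real n - 1)) * (1 / ((real n - real t) * (real n - real t - 1)))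
      = C"
    unfolding C_def by (rule aux_cancel2) (use nz in simp)
  have r: "k i j * Fd n t i j = C * (k i j * (if i \<le> t \<and> j \<le> t then 1 else 0))
      - C * (k i j * (if t < i \<and> t < j then 1 else 0))" for i j
    unfolding Fd_def C_def by (simp add: algebra_simps)
  show ?thesis
    unfolding Dstat_def alpha_def beta_def mult.assoc[symmetric] e1 e2 r
    by (simp add: sum_subtractf sum_distrib_left mult.assoc)
qed

lemma W_perm:
  assumes "2 \<le> t" "t + 2 \<le> n" "p permutes {1..n}"
  shows "Wstat n (permk (inv p) k) t = (\<Sum>u\<in>{1..n}. \<Sum>v\<in>{1..n}-{u}. k u v * Fw n t (p u) (p v))"
  unfolding W_form[OF assms(1,2)] permk_def
  by (subst reindex2[OF assms(3)]) (simp add: permutes_inverses[OF assms(3)])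

lemma D_perm:
  assumes "2 \<le> t" "t + 2 \<le> n" "p permutes {1..n}"
  shows "Dstat n (permk (inv p) k) t = (\<Sum>u\<in>{1..n}. \<Sum>v\<in>{1..n}-{u}. k u v * Fd n t (p u) (p v))"
  unfolding D_form[OF assms(1,2)] permk_def
  by (subst reindex2[OF assms(3)]) (simp add: permutes_inverses[OF assms(3)])

lemma Fw_Y: "Fw n t (p u) (p v) = 1 / (real n * (real t - 1)) * (Yv t p u * Yv t p v)
   + 1 / (real n * (real n - real t - 1)) * ((1 - Yv t p u) * (1 - Yv t p v))"
  unfolding Fw_def Yv_def by auto

lemma Fd_Y: "Fd n t (p u) (p v) = 1 / (real n * (real n - 1)) * (Yv t p u + Yv t p v - 1)"
  unfolding Fd_def Yv_def by auto

lemma Y_sum: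
  assumes "t \<le> n" "p permutes {1..n}"
  shows "(\<Sum>w\<in>{1..n}. Yv t p w) = real t"
proof -
  have "(\<Sum>w\<in>{1..n}. Yv t p w) = (\<Sum>w\<in>{1..n}. (\<lambda>i. if i \<le> t then 1 else (0::real)) (p w))"
    unfolding Yv_def by simp
  also have "\<dots> = (\<Sum>i\<in>{1..n}. if i \<le> t then 1 else (0::real))"
    by (rule sum.reindex_bij_betw[OF permutes_imp_bij[OF assms(2)]])
  also have "\<dots> = real (card ({1..n} \<inter> {i. i \<le> t}))"
    by (simp add: sum.If_cases)
  also have "{1..n} \<inter> {i. i \<le> t} = {1..t}" using assms(1) by auto
  finally show ?thesis by simp
qed

lemma E1:
  assumes "t \<le> n" "u \<in> {1..n}"
  shows "permE n (\<lambda>p. Yv t p u) = real t / real n"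
proof -
  have eq: "permE n (\<lambda>p. Yv t p w) = permE n (\<lambda>p. Yv t p 1)" if "w \<in> {1..n}" for w
  proof -
    have "1 \<in> {1..n}" using that by auto
    from permE_swap[OF that this, of "\<lambda>p. Yv t p w"]
    show ?thesis by (simp add: Yv_def)
  qed
  have "real t = permE n (\<lambda>p. \<Sum>w\<in>{1..n}. Yv t p w)"
    using Y_sum[OF assms(1)] permE_cong[of n "\<lambda>p. \<Sum>w\<in>{1..n}. Yv t p w" "\<lambda>p. real t"]
    by (simp add: permE_const)
  also have "\<dots> = (\<Sum>w\<in>{1..n}. permE n (\<lambda>p. Yv t p w))" by (rule permE_sum)
  also have "\<dots> = (\<Sum>w\<in>{1..n}. permE n (\<lambda>p. Yv t p 1))" by (rule sum.cong[OF refl eq])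
  also have "\<dots> = real n * permE n (\<lambda>p. Yv t p 1)" by simp
  finally have "permE n (\<lambda>p. Yv t p 1) = real t / real n" using assms by (simp add: field_simps)
  then show ?thesis using eq[OF assms(2)] by simp
qed

lemma Ysq: "Yv t p u * Yv t p u = Yv t p u" unfolding Yv_def by simp

lemma solve_lin: "(c::real) \<noteq> 0 \<Longrightarrow> a = c * X \<Longrightarrow> X = a / c"
  by simp

lemma E2:
  assumes "t \<le> n" "u \<in> {1..n}" "v \<in> {1..n}" "u \<noteq> v"
  shows "permE n (\<lambda>p. Yv t p u * Yv t p v) = real t * (real t - 1) / (real n * (real n - 1))"
proof -
  let ?S = "{1..n}"
  have eq: "permE n (\<lambda>p. Yv t p u * Yv t p w) = permE n (\<lambda>p. Yv t p u * Yv t p v)"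
    if "w \<in> ?S - {u}" for w
  proof -
    have "w \<in> ?S" using that by auto
    from permE_swap[OF this assms(3), of "\<lambda>p. Yv t p u * Yv t p w"]
    show ?thesis using that assms by (simp add: Yv_def)
  qed
  have pt: "(\<Sum>w\<in>?S-{u}. Yv t p u * Yv t p w) = (real t - 1) * Yv t p u" if "p permutes ?S" for p
  proof -
    have "(\<Sum>w\<in>?S-{u}. Yv t p u * Yv t p w) = Yv t p u * (\<Sum>w\<in>?S-{u}. Yv t p w)"
      by (simp add: sum_distrib_left)
    also have "(\<Sum>w\<in>?S-{u}. Yv t p w) = real t - Yv t p u"
      using sum_diff1[of ?S "Yv t p" u] Y_sum[OF assms(1) that] assms(2) by simp
    finally show ?thesis by (simp add: algebra_simps Ysq)
  qed
  have "(real t - 1) * (real t / real n) = permE n (\<lambda>p. (real t - 1) * Yv t p u)"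
    by (simp add: permE_cmult E1[OF assms(1,2)])
  also have "\<dots> = permE n (\<lambda>p. \<Sum>w\<in>?S-{u}. Yv t p u * Yv t p w)"
    by (rule permE_cong) (rule pt[symmetric])
  also have "\<dots> = (\<Sum>w\<in>?S-{u}. permE n (\<lambda>p. Yv t p u * Yv t p w))" by (rule permE_sum)
  also have "\<dots> = (real n - 1) * permE n (\<lambda>p. Yv t p u * Yv t p v)"
    using sum.cong[OF refl eq, of "?S - {u}"] assms(2) by (simp add: of_nat_diff)
  finally have h: "(real t - 1) * (real t / real n) = (real n - 1) * permE n (\<lambda>p. Yv t p u * Yv t p v)" .
  have nz: "real n - 1 \<noteq> 0" using assms by auto
  have "permE n (\<lambda>p. Yv t p u * Yv t p v) = (real t - 1) * (real t / real n) / (real n - 1)"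
    using solve_lin[OF nz h] .
  then show ?thesis by (simp add: mult.commute)
qed

lemma alg1:
  fixes N T :: real
  assumes "N \<noteq> 0" "N - 1 \<noteq> 0" "T - 1 \<noteq> 0" "N - T - 1 \<noteq> 0"
  shows "1 / (N * (T - 1)) * (T * (T - 1) / (N * (N - 1)))
     + 1 / (N * (N - T - 1)) * (1 - 2 * (T / N) + T * (T - 1) / (N * (N - 1))) = 1 / (N * (N - 1))"
proof -
  have a: "1 / (N * (T - 1)) * (T * (T - 1) / (N * (N - 1))) = T / (N * (N * (N - 1)))"
    using assms by (simp add: divide_simps; simp add: algebra_simps)
  have b: "1 - 2 * (T / N) + T * (T - 1) / (N * (N - 1)) = (N - T) * (N - T - 1) / (N * (N - 1))"
    using assms by (simp add: divide_simps; simp add: algebra_simps)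
  have c: "1 / (N * (N - T - 1)) * ((N - T) * (N - T - 1) / (N * (N - 1))) = (N - T) / (N * (N * (N - 1)))"
    using assms by (simp add: divide_simps; simp add: algebra_simps)
  show ?thesis unfolding a b c using assms by (simp add: divide_simps; simp add: algebra_simps)
qed

lemma alg2:
  fixes N T :: real
  assumes "N \<noteq> 0" "N - 1 \<noteq> 0" "T - 1 \<noteq> 0"
  shows "1 / (N * (T - 1)) * (T * (T - 1) / (N * (N - 1))) = T / (N * (N * (N - 1)))"
  using assms by (simp add: divide_simps; simp add: algebra_simps)

lemma ring1: "(c2::real) - c2 * m - c2 * m + (c1 + c2) * M = c1 * M + c2 * (1 - 2 * m + M)"
  by (simp add: algebra_simps)

lemma KEY:
  assumes tn: "2 \<le> t" "t + 2 \<le> n" and uv: "u \<in> {1..n}" "v \<in> {1..n}" "u \<noteq> v" and w: "w \<in> {1..n}"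
  shows "permCov n (\<lambda>p. 1 / (real n * (real t - 1)) * (Yv t p u * Yv t p v)
            + 1 / (real n * (real n - real t - 1)) * ((1 - Yv t p u) * (1 - Yv t p v)))
          (\<lambda>p. Yv t p w) = 0"
proof -
  let ?S = "{1..n::nat}"
  define c1 where "c1 = 1 / (real n * (real t - 1))"
  define c2 where "c2 = 1 / (real n * (real n - real t - 1))"
  define G where "G = (\<lambda>p. c1 * (Yv t p u * Yv t p v) + c2 * ((1 - Yv t p u) * (1 - Yv t p v)))"
  have tle: "t \<le> n" using tn by simp
  have nz: "real n \<noteq> 0" "real n - 1 \<noteq> 0" "real t - 1 \<noteq> 0" "real n - real t - 1 \<noteq> 0"
    using tn by auto
  have m1u: "permE n (\<lambda>p. Yv t p u) = real t / real n" by (rule E1[OF tle uv(1)])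
  have m1v: "permE n (\<lambda>p. Yv t p v) = real t / real n" by (rule E1[OF tle uv(2)])
  have m1w: "permE n (\<lambda>p. Yv t p w) = real t / real n" by (rule E1[OF tle w])
  have m2: "permE n (\<lambda>p. Yv t p u * Yv t p v) = real t * (real t - 1) / (real n * (real n - 1))"
    by (rule E2[OF tle uv])
  have Gexp: "G p = c2 - c2 * Yv t p u - c2 * Yv t p v + (c1 + c2) * (Yv t p u * Yv t p v)" for p
    unfolding G_def by (simp add: algebra_simps)
  have EG0: "permE n G = c2 - c2 * (real t / real n) - c2 * (real t / real n)
      + (c1 + c2) * (real t * (real t - 1) / (real n * (real n - 1)))"
    unfolding Gexp by (simp add: permE_add permE_diff permE_cmult permE_const m1u m1v m2)
  have EG: "permE n G = 1 / (real n * (real n - 1))"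
  proof -
    have "permE n G = c1 * (real t * (real t - 1) / (real n * (real n - 1)))
      + c2 * (1 - 2 * (real t / real n) + real t * (real t - 1) / (real n * (real n - 1)))"
      unfolding EG0 by (rule ring1)
    also have "\<dots> = 1 / (real n * (real n - 1))" unfolding c1_def c2_def by (rule alg1[OF nz])
    finally show ?thesis .
  qed
  have c1m2: "c1 * (real t * (real t - 1) / (real n * (real n - 1))) = real t / (real n * (real n * (real n - 1)))"
    unfolding c1_def by (rule alg2[OF nz(1-3)])
  have GYu: "G p * Yv t p u = c1 * (Yv t p u * Yv t p v)" for p
    unfolding G_def Yv_def by auto
  have GYv: "G p * Yv t p v = c1 * (Yv t p u * Yv t p v)" for p
    unfolding G_def Yv_def by auto
  have EGYu: "permE n (\<lambda>p. G p * Yv t p u) = real t / (real n * (real n * (real n - 1)))"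
    unfolding GYu permE_cmult m2 c1m2 ..
  have EGYv: "permE n (\<lambda>p. G p * Yv t p v) = real t / (real n * (real n * (real n - 1)))"
    unfolding GYv permE_cmult m2 c1m2 ..
  have target: "real t / (real n * (real n * (real n - 1))) = 1 / (real n * (real n - 1)) * (real t / real n)"
    using nz by (simp add: divide_simps)
  have EGYw: "permE n (\<lambda>p. G p * Yv t p w) = real t / (real n * (real n * (real n - 1)))"
  proof (cases "w = u \<or> w = v")
    case True then show ?thesis using EGYu EGYv by auto
  next
    case False
    have eq: "permE n (\<lambda>p. G p * Yv t p w') = permE n (\<lambda>p. G p * Yv t p w)"
      if "w' \<in> ?S - {u, v}" for w'
    proof -
      have "w' \<in> ?S" using that by auto
      from permE_swap[OF this w, of "\<lambda>p. G p * Yv t p w'"]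
      show ?thesis using that False unfolding G_def by (simp add: Yv_def)
    qed
    have pt: "(\<Sum>w'\<in>?S-{u,v}. G p * Yv t p w') = real t * G p - 2 * (c1 * (Yv t p u * Yv t p v))"
      if "p permutes ?S" for p
    proof -
      have "(\<Sum>w'\<in>?S-{u,v}. Yv t p w') = (\<Sum>w'\<in>?S. Yv t p w') - (\<Sum>w'\<in>{u,v}. Yv t p w')"
        by (rule sum_diff) (use uv in auto)
      also have "\<dots> = real t - Yv t p u - Yv t p v" using Y_sum[OF tle that] uv(3) by simp
      finally have s: "(\<Sum>w'\<in>?S-{u,v}. Yv t p w') = real t - Yv t p u - Yv t p v" .
      have "(\<Sum>w'\<in>?S-{u,v}. G p * Yv t p w') = G p * (\<Sum>w'\<in>?S-{u,v}. Yv t p w')"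
        by (simp add: sum_distrib_left)
      also have "\<dots> = real t * G p - G p * Yv t p u - G p * Yv t p v" unfolding s by (simp add: algebra_simps)
      also have "\<dots> = real t * G p - 2 * (c1 * (Yv t p u * Yv t p v))" unfolding GYu GYv by simp
      finally show ?thesis .
    qed
    have card: "card (?S - {u, v}) = n - 2" using uv by (simp add: card_Diff_subset)
    have "real t * (1 / (real n * (real n - 1))) - 2 * (real t / (real n * (real n * (real n - 1))))
        = real t * permE n G - 2 * (c1 * permE n (\<lambda>p. Yv t p u * Yv t p v))"
      unfolding EG m2 c1m2 ..
    also have "\<dots> = permE n (\<lambda>p. real t * G p - 2 * (c1 * (Yv t p u * Yv t p v)))"
      by (simp only: permE_diff permE_cmult)
    also have "\<dots> = permE n (\<lambda>p. \<Sum>w'\<in>?S-{u,v}. G p * Yv t p w')"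
      by (rule permE_cong) (rule pt[symmetric])
    also have "\<dots> = (\<Sum>w'\<in>?S-{u,v}. permE n (\<lambda>p. G p * Yv t p w'))" by (rule permE_sum)
    also have "\<dots> = (\<Sum>w'\<in>?S-{u,v}. permE n (\<lambda>p. G p * Yv t p w))" by (rule sum.cong[OF refl eq])
    also have "\<dots> = (real n - 2) * permE n (\<lambda>p. G p * Yv t p w)" using card tn by (simp add: of_nat_diff)
    finally have h: "real t * (1 / (real n * (real n - 1))) - 2 * (real t / (real n * (real n * (real n - 1))))
        = (real n - 2) * permE n (\<lambda>p. G p * Yv t p w)" .
    have nz2: "real n - 2 \<noteq> 0" using tn by auto
    have "permE n (\<lambda>p. G p * Yv t p w) = (real t * (1 / (real n * (real n - 1))) - 2 * (real t / (real n * (real n * (real n - 1))))) / (real n - 2)"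
      by (rule solve_lin[OF nz2 h])
    also have "\<dots> = real t / (real n * (real n * (real n - 1)))"
      using nz nz2 by (simp add: divide_simps; simp add: algebra_simps)
    finally show ?thesis .
  qed
  have "permCov n G (\<lambda>p. Yv t p w) = 0"
    unfolding permCov_def EGYw EG m1w target by simp
  then show ?thesis unfolding G_def c1_def c2_def .
qed

lemma cov_WD:
  assumes tn: "2 \<le> t" "t + 2 \<le> n"
  shows "permCov n (\<lambda>p. Wstat n (permk p ka) t) (\<lambda>p. Dstat n (permk p kb) t) = 0"
proof -
  let ?S = "{1..n::nat}"
  define c1 where "c1 = 1 / (real n * (real t - 1))"
  define c2 where "c2 = 1 / (real n * (real n - real t - 1))"
  define c where "c = 1 / (real n * (real n - 1))"
  define G where "G = (\<lambda>u v p. c1 * (Yv t p u * Yv t p v) + c2 * ((1 - Yv t p u) * (1 - Yv t p v)))"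
  have "permCov n (\<lambda>p. Wstat n (permk p ka) t) (\<lambda>p. Dstat n (permk p kb) t)
      = permCov n (\<lambda>p. Wstat n (permk (inv p) ka) t) (\<lambda>p. Dstat n (permk (inv p) kb) t)"
    by (rule permCov_inv)
  also have "\<dots> = permCov n (\<lambda>p. \<Sum>u\<in>?S. \<Sum>v\<in>?S-{u}. ka u v * G u v p)
      (\<lambda>p. \<Sum>u\<in>?S. \<Sum>v\<in>?S-{u}. kb u v * (c * (Yv t p u + Yv t p v - 1)))"
    by (rule permCov_cong) (simp_all only: W_perm[OF tn] D_perm[OF tn] Fw_Y Fd_Y G_def c1_def c2_def c_def)
  also have "\<dots> = (\<Sum>u\<in>?S. \<Sum>v\<in>?S-{u}. \<Sum>u'\<in>?S. \<Sum>v'\<in>?S-{u'}. ka u v * (kb u' v' *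
        (c * permCov n (G u v) (\<lambda>p. Yv t p u' + Yv t p v' - 1))))"
    by (simp only: permCov_sum_left permCov_sum_right permCov_cmult_left permCov_cmult_right)
  also have "\<dots> = 0"
  proof (intro sum.neutral ballI)
    fix u v u' v' assume a: "u \<in> ?S" "v \<in> ?S - {u}" "u' \<in> ?S" "v' \<in> ?S - {u'}"
    have "permCov n (G u v) (\<lambda>p. Yv t p u' + Yv t p v' - 1)
       = permCov n (G u v) (\<lambda>p. Yv t p u') + permCov n (G u v) (\<lambda>p. Yv t p v') - permCov n (G u v) (\<lambda>p. 1)"
      by (simp only: permCov_diff_right permCov_add_right)
    also have "\<dots> = 0"
      using KEY[OF tn a(1), of v u'] KEY[OF tn a(1), of v v'] a
      unfolding G_def c1_def c2_def permCov_const_right by auto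
    finally have "permCov n (G u v) (\<lambda>p. Yv t p u' + Yv t p v' - 1) = 0" .
    then show "ka u v * (kb u' v' *
        (c * permCov n (G u v) (\<lambda>p. Yv t p u' + Yv t p v' - 1))) = 0" by simp
  qed
  finally show ?thesis .
qed

theorem mainTheorem2:
  fixes K :: "nat \<Rightarrow> nat \<Rightarrow> nat \<Rightarrow> real" and n t :: nat
  assumes "n \<ge> 4" and "2 \<le> t" and "t \<le> n - 2"
    and "\<And>x i j. x \<in> {1,2} \<Longrightarrow> i \<in> {1..n} \<Longrightarrow> j \<in> {1..n} \<Longrightarrow> K x i j = K x j i"
  shows "(\<forall>a\<in>{1,2}. \<forall>b\<in>{1,2}.
            permCov n (\<lambda>p. Wstat n (permk p (K a)) t) (\<lambda>p. Dstat n (permk p (K b)) t) = 0)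
       \<and> (\<forall>c1 c2 d1 d2 :: real.
            permCov n (\<lambda>p. c1 * Wstat n (permk p (K 1)) t + c2 * Wstat n (permk p (K 2)) t)
                      (\<lambda>p. d1 * Dstat n (permk p (K 1)) t + d2 * Dstat n (permk p (K 2)) t) = 0)"
proof -
  have tn: "2 \<le> t" "t + 2 \<le> n" using assms by auto
  show ?thesis
    by (simp add: permCov_add_left permCov_add_right permCov_cmult_left permCov_cmult_right cov_WD[OF tn])
qed

end
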